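(* Let $G$ be a graph with $m\ge1$ edges, let $k\ge1$ and $0\le p\le m$ be integers, $\ell=m-p$, and $\eta=k(\ell+2)$. Let $E$ be the classification instance $E(G,\eta)$ described in the context. Then $G$ has a set $U\subseteq V(G)$ with $|U|\le k$ that is incident to at least $p$ edges if and only if there is a decision tree $T$ with $|T|\le k$ and $|O(T,E)|\le \ell\eta$.
   Context: Fix an ordering $e_1,\dots,e_m$ of $E(G)$. For a positive integer $\eta$, $E(G,\eta)$ has features $V(G)\cup\{d_0\}$ (one "vertex feature" per vertex, plus $d_0$) and, for each $r\in[\eta]$ and $i\in[m]$: a negative example with $d_0=2m(r-1)+2i-1$ and, for each $v\in V(G)$, value $1$ if $v$ is an endpoint of $e_i$ and $0$ otherwise; and a positive example with $d_0=2m(r-1)+2i$ and value $0$ on every vertex feature. A decision tree (DT) is a rooted tree whose test nodes $v$ carry a feature $f(v)$ and integer threshold $\lambda(v)$ (examples with $e(f(v))\le\lambda(v)$ go left, others right) and whose leaves are labeled positive or negative. $|T|$ is the number of test nodes. An example is an outlier for $T$ if it reaches a leaf with the opposite label; $O(T,E)$ is the set of outliers. *)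

theory Defs
  imports Main
begin

(* Features: None is d_0, Some v is the vertex feature of v. *)
type_synonym 'v feature = "'v option"
type_synonym 'v example = "('v feature \<Rightarrow> int) \<times> bool"  (* values, label (True = positive) *)

datatype 'f dtree = Leaf bool | Node 'f int "'f dtree" "'f dtree"

fun dt_size :: "'f dtree \<Rightarrow> nat" where
  "dt_size (Leaf b) = 0"
| "dt_size (Node f t l r) = Suc (dt_size l + dt_size r)"

fun dt_features :: "'f dtree \<Rightarrow> 'f set" where
  "dt_features (Leaf b) = {}"
| "dt_features (Node f t l r) = insert f (dt_features l \<union> dt_features r)"

fun dt_classify :: "'f dtree \<Rightarrow> ('f \<Rightarrow> int) \<Rightarrow> bool" where
  "dt_classify (Leaf b) e = b"
| "dt_classify (Node f t l r) e = (if e f \<le> t then dt_classify l e else dt_classify r e)"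

definition outliers :: "'f dtree \<Rightarrow> (('f \<Rightarrow> int) \<times> bool) set \<Rightarrow> (('f \<Rightarrow> int) \<times> bool) set" where
  "outliers T E = {x \<in> E. dt_classify T (fst x) \<noteq> snd x}"

definition features :: "'v set \<Rightarrow> 'v feature set" where
  "features V = insert None (Some ` V)"

(* the instance E(G,eta); edges e_1..e_m are es!0 .. es!(m-1) *)
definition neg_ex :: "'v set list \<Rightarrow> nat \<Rightarrow> nat \<Rightarrow> 'v example" where
  "neg_ex es r i = ((\<lambda>f. case f of
        None \<Rightarrow> int (2 * length es * (r - 1) + 2 * i - 1)
      | Some v \<Rightarrow> (if v \<in> es ! (i - 1) then 1 else 0)), False)"

definition pos_ex :: "'v set list \<Rightarrow> nat \<Rightarrow> nat \<Rightarrow> 'v example" where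
  "pos_ex es r i = ((\<lambda>f. case f of
        None \<Rightarrow> int (2 * length es * (r - 1) + 2 * i)
      | Some v \<Rightarrow> 0), True)"

definition instance_E :: "'v set list \<Rightarrow> nat \<Rightarrow> 'v example set" where
  "instance_E es \<eta> =
     {neg_ex es r i | r i. r \<in> {1..\<eta>} \<and> i \<in> {1..length es}}
   \<union> {pos_ex es r i | r i. r \<in> {1..\<eta>} \<and> i \<in> {1..length es}}"

end

theory Submission
  imports Defs
begin

fun dnone :: "'v feature dtree \<Rightarrow> int set" where
  "dnone (Leaf b) = {}"
| "dnone (Node f t l r) = (if f = None then insert t (dnone l \<union> dnone r) else dnone l \<union> dnone r)"

lemma dnone_finite: "finite (dnone T)"
  by (induction T) auto

lemma dnone_card: "card (dnone T) \<le> dt_size T"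
proof (induction T)
  case (Leaf b) then show ?case by simp
next
  case (Node f t l r)
  have "card (dnone l \<union> dnone r) \<le> dt_size l + dt_size r"
    using card_Un_le[of "dnone l" "dnone r"] Node by linarith
  moreover have "card (insert t (dnone l \<union> dnone r)) \<le> Suc (card (dnone l \<union> dnone r))"
    by (simp add: card_insert_le_m1 card_insert_if)
  ultimately show ?case by auto
qed

lemma feat_finite: "finite (dt_features T)"
  by (induction T) auto

lemma feat_card: "card (dt_features T) \<le> dt_size T"
proof (induction T)
  case (Leaf b) then show ?case by simp
next
  case (Node f t l r)
  have "card (dt_features l \<union> dt_features r) \<le> dt_size l + dt_size r"
    using card_Un_le[of "dt_features l" "dt_features r"] Node by linarith
  moreover have "card (insert f (dt_features l \<union> dt_features r)) \<le> Suc (card (dt_features l \<union> dt_features r))"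
    using feat_finite[of l] feat_finite[of r] by (simp add: card_insert_if)
  ultimately show ?case by auto
qed

lemma classify_eq:
  assumes "\<forall>f\<in>dt_features T. f \<noteq> None \<longrightarrow> x f = y f"
    and "\<forall>t\<in>dnone T. (x None \<le> t) = (y None \<le> t)"
  shows "dt_classify T x = dt_classify T y"
  using assms
proof (induction T)
  case (Leaf b) then show ?case by simp
next
  case (Node f t l r)
  have "(x f \<le> t) = (y f \<le> t)"
    using Node.prems by (cases f) auto
  then show ?case using Node by auto
qed

fun chain :: "'v list \<Rightarrow> 'v feature dtree" where
  "chain [] = Leaf True"
| "chain (u # us) = Node (Some u) 0 (chain us) (Leaf False)"

lemma chain_size: "dt_size (chain us) = length us"
  by (induction us) auto

lemma chain_feat: "dt_features (chain us) = Some ` set us"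
  by (induction us) auto

lemma chain_classify: "dt_classify (chain us) x = (\<forall>u\<in>set us. x (Some u) \<le> 0)"
  by (induction us) auto

lemma arith_inj:
  fixes m a b i j :: nat
  assumes "1 \<le> i" "i \<le> m" "1 \<le> j" "j \<le> m" "m * a + i = m * b + j"
  shows "a = b \<and> i = j"
proof -
  have "\<not> a < b"
  proof
    assume "a < b"
    then have "m * Suc a \<le> m * b" by (intro mult_le_mono2) simp
    then show False using assms by simp
  qed
  moreover have "\<not> b < a"
  proof
    assume "b < a"
    then have "m * Suc b \<le> m * a" by (intro mult_le_mono2) simp
    then show False using assms by simp
  qed
  ultimately show ?thesis using assms by simp
qed

lemma neg_None: "r \<ge> 1 \<Longrightarrow> i \<ge> 1 \<Longrightarrow>
   fst (neg_ex es r i) None = int (2 * length es * (r - 1) + 2 * i) - 1"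
  by (simp add: neg_ex_def of_nat_diff)

lemma pos_None: "fst (pos_ex es r i) None = int (2 * length es * (r - 1) + 2 * i)"
  by (simp add: pos_ex_def)

lemma idx_inj:
  assumes "r \<ge> 1" "r' \<ge> 1" "1 \<le> i" "i \<le> length es" "1 \<le> i'" "i' \<le> length es"
    and "2 * length es * (r - 1) + 2 * i = 2 * length es * (r' - 1) + 2 * i'"
  shows "r = r' \<and> i = i'"
proof -
  have "length es * (r - 1) + i = length es * (r' - 1) + i'" using assms(7) by simp
  from arith_inj[OF assms(3-6) this] have "r - 1 = r' - 1" "i = i'" by auto
  with assms(1,2) show ?thesis by arith
qed

theorem lemma4:
  fixes V :: "'v set" and es :: "'v set list" and k p :: nat
  assumes "finite V"
    and "distinct es"
    and "\<forall>e\<in>set es. e \<subseteq> V \<and> card e = 2"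
    and "length es \<ge> 1"
    and "k \<ge> 1"
    and "p \<le> length es"
  shows "(\<exists>U. U \<subseteq> V \<and> card U \<le> k \<and> card {e \<in> set es. e \<inter> U \<noteq> {}} \<ge> p)
     \<longleftrightarrow> (\<exists>T :: 'v feature dtree. dt_features T \<subseteq> features V \<and> dt_size T \<le> k \<and>
            card (outliers T (instance_E es (k * (length es - p + 2))))
              \<le> (length es - p) * (k * (length es - p + 2)))"
proof -
  define m where "m = length es"
  define \<eta> where "\<eta> = k * (m - p + 2)"
  define R where "R = {1..\<eta>}"
  have finE: "finite (instance_E es \<eta>)"
  proof -
    have "instance_E es \<eta> \<subseteq> (\<lambda>(r,i). neg_ex es r i) ` (R \<times> {1..m}) \<union> (\<lambda>(r,i). pos_ex es r i) ` (R \<times> {1..m})"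
      unfolding instance_E_def R_def m_def by force
    then show ?thesis unfolding R_def by (rule finite_subset) simp
  qed
  have negE: "neg_ex es r i \<in> instance_E es \<eta>" if "r \<in> R" "i \<in> {1..m}" for r i
    using that unfolding instance_E_def R_def m_def by blast
  have posE: "pos_ex es r i \<in> instance_E es \<eta>" if "r \<in> R" "i \<in> {1..m}" for r i
    using that unfolding instance_E_def R_def m_def by blast
  define Iu where "Iu U = {i\<in>{1..m}. es!(i-1) \<inter> U = {}}" for U :: "'v set"
  have cardIu: "card (Iu U) + card {e \<in> set es. e \<inter> U \<noteq> {}} = m" for U
  proof -
    let ?Unc = "{e \<in> set es. e \<inter> U = {}}"
    have "bij_betw (\<lambda>i. es!(i-1)) (Iu U) ?Unc"
    proof (rule bij_betwI')
      fix i j assume "i \<in> Iu U" "j \<in> Iu U"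
      then show "(es!(i-1) = es!(j-1)) = (i = j)"
        using nth_eq_iff_index_eq[OF assms(2), of "i-1" "j-1"] unfolding Iu_def m_def by (auto; arith)
    next
      fix i assume "i \<in> Iu U" then show "es!(i-1) \<in> ?Unc" unfolding Iu_def m_def by auto
    next
      fix e assume "e \<in> ?Unc"
      then obtain j where "j < m" "es!j = e" "e \<inter> U = {}" unfolding m_def by (auto simp: in_set_conv_nth)
      then show "\<exists>i\<in>Iu U. e = es!(i-1)" unfolding Iu_def by (intro bexI[of _ "Suc j"]) auto
    qed
    then have "card (Iu U) = card ?Unc" by (rule bij_betw_same_card)
    moreover have "card ?Unc + card {e \<in> set es. e \<inter> U \<noteq> {}} = card (set es)"
    proof -
      have "set es = ?Unc \<union> {e \<in> set es. e \<inter> U \<noteq> {}}" by auto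
      moreover have "card (?Unc \<union> {e \<in> set es. e \<inter> U \<noteq> {}}) = card ?Unc + card {e \<in> set es. e \<inter> U \<noteq> {}}"
        by (rule card_Un_disjoint) auto
      ultimately show ?thesis by simp
    qed
    moreover have "card (set es) = m" unfolding m_def using assms(2) by (simp add: distinct_card)
    ultimately show ?thesis by simp
  qed
  have "(\<exists>U. U \<subseteq> V \<and> card U \<le> k \<and> card {e \<in> set es. e \<inter> U \<noteq> {}} \<ge> p)
     \<longleftrightarrow> (\<exists>T :: 'v feature dtree. dt_features T \<subseteq> features V \<and> dt_size T \<le> k \<and>
            card (outliers T (instance_E es \<eta>)) \<le> (m - p) * \<eta>)"
  proof
    assume "\<exists>U. U \<subseteq> V \<and> card U \<le> k \<and> card {e \<in> set es. e \<inter> U \<noteq> {}} \<ge> p"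
    then obtain U where U: "U \<subseteq> V" "card U \<le> k" "card {e \<in> set es. e \<inter> U \<noteq> {}} \<ge> p" by blast
    have "finite U" using U(1) assms(1) finite_subset by blast
    then obtain us where us: "set us = U" "distinct us" using finite_distinct_list by blast
    let ?T = "chain us"
    have "dt_features ?T \<subseteq> features V" using us U(1) by (auto simp: chain_feat features_def)
    moreover have "dt_size ?T \<le> k" using us U(2) distinct_card[OF us(2)] by (simp add: chain_size)
    moreover have "card (outliers ?T (instance_E es \<eta>)) \<le> (m - p) * \<eta>"
    proof -
      have sub: "outliers ?T (instance_E es \<eta>) \<subseteq> (\<lambda>(r,i). neg_ex es r i) ` (R \<times> Iu U)"
      proof
        fix x assume x: "x \<in> outliers ?T (instance_E es \<eta>)"
        then have xE: "x \<in> instance_E es \<eta>" and cl: "dt_classify ?T (fst x) \<noteq> snd x"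
          unfolding outliers_def by auto
        from xE consider (n) r i where "r \<in> R" "i \<in> {1..m}" "x = neg_ex es r i"
          | (p) r i where "r \<in> R" "i \<in> {1..m}" "x = pos_ex es r i"
          unfolding instance_E_def R_def m_def by blast
        then show "x \<in> (\<lambda>(r,i). neg_ex es r i) ` (R \<times> Iu U)"
        proof cases
          case n
          then have "\<forall>u\<in>U. u \<notin> es!(i-1)" using cl us(1)
            by (auto simp: chain_classify neg_ex_def split: if_splits)
          then have "i \<in> Iu U" using n unfolding Iu_def by auto
          then show ?thesis using n by auto
        next
          case p
          then show ?thesis using cl by (simp add: chain_classify pos_ex_def)
        qed
      qed
      have "card (outliers ?T (instance_E es \<eta>)) \<le> card ((\<lambda>(r,i). neg_ex es r i) ` (R \<times> Iu U))"
        by (rule card_mono[OF _ sub]) (simp add: R_def Iu_def)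
      also have "\<dots> \<le> card (R \<times> Iu U)" by (rule card_image_le) (simp add: R_def Iu_def)
      also have "\<dots> = \<eta> * card (Iu U)" by (simp add: R_def card_cartesian_product)
      also have "\<dots> \<le> \<eta> * (m - p)"
        using cardIu[of U] U(3) by (intro mult_le_mono2) linarith
      finally show ?thesis by (simp add: mult.commute)
    qed
    ultimately show "\<exists>T :: 'v feature dtree. dt_features T \<subseteq> features V \<and> dt_size T \<le> k \<and>
            card (outliers T (instance_E es \<eta>)) \<le> (m - p) * \<eta>" by blast
  next
    assume "\<exists>T :: 'v feature dtree. dt_features T \<subseteq> features V \<and> dt_size T \<le> k \<and>
            card (outliers T (instance_E es \<eta>)) \<le> (m - p) * \<eta>"
    then obtain T :: "'v feature dtree" where T: "dt_features T \<subseteq> features V" "dt_size T \<le> k"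
      "card (outliers T (instance_E es \<eta>)) \<le> (m - p) * \<eta>" by blast
    define U where "U = {v. Some v \<in> dt_features T}"
    have "U \<subseteq> V" using T(1) unfolding U_def features_def by auto
    moreover have "card U \<le> k"
    proof -
      have "Some ` U \<subseteq> dt_features T" unfolding U_def by auto
      then have "card (Some ` U) \<le> card (dt_features T)" by (intro card_mono feat_finite)
      then have "card U \<le> card (dt_features T)" by (simp add: card_image)
      then show ?thesis using feat_card[of T] T(2) by linarith
    qed
    moreover have "card {e \<in> set es. e \<inter> U \<noteq> {}} \<ge> p"
    proof (rule ccontr)
      assume "\<not> ?thesis"
      then have Iu_big: "card (Iu U) \<ge> m - p + 1" using cardIu[of U] assms(6) unfolding m_def by linarith
      define NS where "NS = {(r,i) \<in> R \<times> Iu U. int (2 * m * (r - 1) + 2 * i) - 1 \<notin> dnone T}"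
      define Sep where "Sep = {(r,i) \<in> R \<times> Iu U. int (2 * m * (r - 1) + 2 * i) - 1 \<in> dnone T}"
      have finP: "finite (R \<times> Iu U)" by (simp add: R_def Iu_def)
      have "card Sep \<le> card (dnone T)"
      proof (rule card_inj_on_le[of "\<lambda>(r,i). int (2 * m * (r - 1) + 2 * i) - 1"])
        show "inj_on (\<lambda>(r,i). int (2 * m * (r - 1) + 2 * i) - 1) Sep"
        proof (rule inj_onI, clarify)
          fix r i r' i' assume "(r,i) \<in> Sep" "(r',i') \<in> Sep"
            "int (2 * m * (r - 1) + 2 * i) - 1 = int (2 * m * (r' - 1) + 2 * i') - 1"
          then have rng: "r \<ge> 1" "r' \<ge> 1" "1 \<le> i" "i \<le> length es" "1 \<le> i'" "i' \<le> length es"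
            and eq: "int (2 * m * (r - 1) + 2 * i) - 1 = int (2 * m * (r' - 1) + 2 * i') - 1"
            unfolding Sep_def R_def Iu_def m_def by auto
          from eq have "2 * length es * (r - 1) + 2 * i = 2 * length es * (r' - 1) + 2 * i'"
            unfolding m_def by (simp only: diff_add_cancel of_nat_eq_iff add_right_cancel)
          then show "r = r' \<and> i = i'" using idx_inj[OF rng] by blast
        qed
        show "(\<lambda>(r,i). int (2 * m * (r - 1) + 2 * i) - 1) ` Sep \<subseteq> dnone T" unfolding Sep_def by auto
      qed (rule dnone_finite)
      then have cSep: "card Sep \<le> k" using dnone_card[of T] T(2) by linarith
      have "R \<times> Iu U = NS \<union> Sep" "NS \<inter> Sep = {}" unfolding NS_def Sep_def by auto
      then have "card NS + card Sep = card (R \<times> Iu U)"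
        using finP by (metis card_Un_disjoint finite_Un)
      also have "card (R \<times> Iu U) = \<eta> * card (Iu U)" by (simp add: R_def card_cartesian_product)
      finally have cNS: "card NS + k \<ge> \<eta> * (m - p + 1)" using cSep Iu_big
        by (metis add_le_mono le_refl mult_le_mono order_trans)
      define g where "g = (\<lambda>(r,i). if neg_ex es r i \<in> outliers T (instance_E es \<eta>) then neg_ex es r i else pos_ex es r i)"
      have "card NS \<le> card (outliers T (instance_E es \<eta>))"
      proof (rule card_inj_on_le[of g])
        show "inj_on g NS"
        proof (rule inj_onI, clarify)
          fix r i r' i' assume A: "(r,i) \<in> NS" "(r',i') \<in> NS" "g (r,i) = g (r',i')"
          have rng: "r \<ge> 1" "r' \<ge> 1" "1 \<le> i" "i \<le> length es" "1 \<le> i'" "i' \<le> length es"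
            using A(1,2) unfolding NS_def R_def Iu_def m_def by auto
          have snd_eq: "snd (g (r,i)) = snd (g (r',i'))" "fst (g (r,i)) None = fst (g (r',i')) None"
            using A(3) by auto
          then have "int (2 * length es * (r - 1) + 2 * i) = int (2 * length es * (r' - 1) + 2 * i')"
            using rng unfolding g_def
            by (auto simp: neg_None pos_None split: if_splits simp: neg_ex_def pos_ex_def)
          then show "r = r' \<and> i = i'" using idx_inj[OF rng] by linarith
        qed
        have gin: "g (r,i) \<in> outliers T (instance_E es \<eta>)" if A: "(r,i) \<in> NS" for r i
        proof -
          from A have rI: "r \<in> R" "i \<in> {1..m}" "es!(i-1) \<inter> U = {}"
            and nd: "int (2 * m * (r - 1) + 2 * i) - 1 \<notin> dnone T"
            unfolding NS_def Iu_def by auto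
          have "dt_classify T (fst (neg_ex es r i)) = dt_classify T (fst (pos_ex es r i))"
          proof (rule classify_eq)
            show "\<forall>f\<in>dt_features T. f \<noteq> None \<longrightarrow> fst (neg_ex es r i) f = fst (pos_ex es r i) f"
              using rI(3) unfolding U_def by (auto simp: neg_ex_def pos_ex_def)
            show "\<forall>t\<in>dnone T. (fst (neg_ex es r i) None \<le> t) = (fst (pos_ex es r i) None \<le> t)"
            proof
              fix t assume t: "t \<in> dnone T"
              define a where "a = int (2 * m * (r - 1) + 2 * i)"
              have "t \<noteq> a - 1" using nd t unfolding a_def by auto
              moreover have "fst (neg_ex es r i) None = a - 1" "fst (pos_ex es r i) None = a"
                using rI neg_None[of r i es] pos_None[of es r i] unfolding a_def R_def m_def by auto
              ultimately show "(fst (neg_ex es r i) None \<le> t) = (fst (pos_ex es r i) None \<le> t)"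
                by auto
            qed
          qed
          then show "g (r,i) \<in> outliers T (instance_E es \<eta>)"
          proof -
            have sn: "snd (neg_ex es r i) = False" "snd (pos_ex es r i) = True"
              by (simp_all add: neg_ex_def pos_ex_def)
            show "g (r,i) \<in> outliers T (instance_E es \<eta>)"
            proof (cases "neg_ex es r i \<in> outliers T (instance_E es \<eta>)")
              case True then show "g (r,i) \<in> outliers T (instance_E es \<eta>)" unfolding g_def by simp
            next
              case False
              then have "dt_classify T (fst (neg_ex es r i)) = False"
                using negE[OF rI(1,2)] sn unfolding outliers_def by auto
              then have "dt_classify T (fst (pos_ex es r i)) \<noteq> snd (pos_ex es r i)"
                using `dt_classify T (fst (neg_ex es r i)) = dt_classify T (fst (pos_ex es r i))` sn by simp
              then show "g (r,i) \<in> outliers T (instance_E es \<eta>)" using False posE[OF rI(1,2)] unfolding g_def outliers_def by auto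
            qed
          qed
        qed
        show "g ` NS \<subseteq> outliers T (instance_E es \<eta>)" using gin by auto
      next
        show "finite (outliers T (instance_E es \<eta>))"
          using finE unfolding outliers_def by simp
      qed
      then have "card NS \<le> (m - p) * \<eta>" using T(3) by linarith
      moreover have "\<eta> > k" unfolding \<eta>_def using assms(5) by simp
      ultimately show False using cNS by (simp add: algebra_simps)
    qed
    ultimately show "\<exists>U. U \<subseteq> V \<and> card U \<le> k \<and> card {e \<in> set es. e \<inter> U \<noteq> {}} \<ge> p" by blast
  qed
  then show ?thesis unfolding m_def \<eta>_def .
qed

end
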